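(* For every $y_0\in Y$, $\Gamma_{per}(y_0)\subset W_1(y_0)$ and $V_{per}(y_0)\ge k^*(y_0)$.
   Context: Let $Y\subset\mathbb{R}^m$ be nonempty compact, $U_0$ a compact metric space, $U(\cdot):Y\rightsquigarrow U_0$ upper semicontinuous and compact-valued, and $f:\mathbb{R}^m\times U_0\to\mathbb{R}^m$, $k:\mathbb{R}^m\times U_0\to\mathbb{R}$ continuous. Put $A(y):=\{u\in U(y): f(y,u)\in Y\}$ and $G:=\{(y,u):y\in Y,\ u\in A(y)\}$. Standing assumption: $A(y)\ne\emptyset$ for all $y$. An admissible process from $z\in Y$ on a time range is a pair $(y(t),u(t))$ with $y(0)=z$, $u(t)\in A(y(t))$ and $y(t+1)=f(y(t),u(t))$. Let $\mathcal U_{\bar t}(y_0)$ denote the admissible controls from $y_0$ on $\{0,\dots,\bar t-1\}$. Periodic processes: - For an integer $\mathcal T>0$, a $\mathcal T$-periodic admissible process $(y_{\mathcal T}(\cdot),u_{\mathcal T}(\cdot))$ is an admissible process on $\{0,1,\dots\}$ (from $y_{\mathcal T}(0)$) satisfying $(y_{\mathcal T}(t+\mathcal T),u_{\mathcal T}(t+\mathcal T))=(y_{\mathcal T}(t),u_{\mathcal T}(t))$ for all $t$. - Such a process is finite-time reachable from $y_0$ if there exist an integer $\bar t\ge0$ and a control $u\in\mathcal U_{\bar t}(y_0)$ whose trajectory satisfies $y(\bar t)=y_{\mathcal T}(0)$. - $\Gamma_{per}(y_0)$ is the set of Borel probability measures $\gamma$ on $G$ of the form $\gamma(Q)=\frac1{\mathcal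 T}\sum_{t=0}^{\mathcal T-1}1_Q(y_{\mathcal T}(t),u_{\mathcal T}(t))$ generated by such finite-time-reachable periodic processes. - $V_{per}(y_0):=\inf\frac1{\mathcal T}\sum_{t=0}^{\mathcal T-1}k(y_{\mathcal T}(t),u_{\mathcal T}(t))$, where the infimum is over all $\mathcal T$ and all such processes. Measure spaces and LP objects: - $\mathcal P(G)$ denotes the Borel probability measures on $G$ and $\mathcal M_+(G)$ the finite nonnegative Borel measures on $G$. - $W:=\{\gamma\in\mathcal P(G):\int_G(\varphi(f(y,u))-\varphi(y))\,d\gamma=0\ \forall\varphi\in C(Y)\}$. - $W_1(y_0)$ is the set of $\gamma\in W$ for which there exists $\xi\in\mathcal M_+(G)$ with $\int_G(\varphi(y)-\varphi(y_0))\,d\gamma=\int_G(\varphi(f(y,u))-\varphi(y))\,d\xi$ for all $\varphi\in C(Y)$. - $k^*(y_0):=\inf_{\gamma\in W_1(y_0)}\int_Gk\,d\gamma$. Equivalently, $k^*(y_0)$ is the infimum of $\int_G k\,d\gamma$ over pairs $(\gamma,\xi)\in\mathcal P(G)\times\mathcal M_+(G)$ with $\gamma\in W$ and $\int_G(\varphi(y_0)-\varphi(y))\,d\gamma+\int_G(\varphi(f(y,u))-\varphi(y))\,d\xi=0$ for all $\varphi\in C(Y)$. *)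

theory Defs
  imports "HOL-Analysis.Analysis" "HOL-Probability.Probability"
begin

definition usc_on :: "'a::topological_space set \<Rightarrow> ('a \<Rightarrow> 'b::topological_space set) \<Rightarrow> bool" where
  "usc_on Y U \<longleftrightarrow> (\<forall>y\<in>Y. \<forall>V. open V \<and> U y \<subseteq> V \<longrightarrow>
      (\<exists>N. open N \<and> y \<in> N \<and> (\<forall>y'\<in>Y \<inter> N. U y' \<subseteq> V)))"

definition adm :: "'a set \<Rightarrow> ('a \<Rightarrow> 'u set) \<Rightarrow> ('a \<Rightarrow> 'u \<Rightarrow> 'a) \<Rightarrow> 'a \<Rightarrow> 'u set" where
  "adm Y U f y = {u \<in> U y. f y u \<in> Y}"

definition graphG :: "'a set \<Rightarrow> ('a \<Rightarrow> 'u set) \<Rightarrow> ('a \<Rightarrow> 'u \<Rightarrow> 'a) \<Rightarrow> ('a \<times> 'u) set" where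
  "graphG Y U f = {(y, u). y \<in> Y \<and> u \<in> adm Y U f y}"

definition prob_on :: "'b::topological_space set \<Rightarrow> 'b measure \<Rightarrow> bool" where
  "prob_on S M \<longleftrightarrow> prob_space M \<and> sets M = sets (restrict_space borel S)"

definition finmeas_on :: "'b::topological_space set \<Rightarrow> 'b measure \<Rightarrow> bool" where
  "finmeas_on S M \<longleftrightarrow> finite_measure M \<and> sets M = sets (restrict_space borel S)"

definition Wset :: "'a::topological_space set \<Rightarrow> ('a \<Rightarrow> 'u::topological_space set) \<Rightarrow> ('a \<Rightarrow> 'u \<Rightarrow> 'a)
    \<Rightarrow> ('a \<times> 'u) measure set" where
  "Wset Y U f = {\<gamma>. prob_on (graphG Y U f) \<gamma> \<and>
     (\<forall>\<phi> :: 'a \<Rightarrow> real. continuous_on Y \<phi> \<longrightarrow>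
        (\<integral>p. \<phi> (f (fst p) (snd p)) - \<phi> (fst p) \<partial>\<gamma>) = 0)}"

definition W1set :: "'a::topological_space set \<Rightarrow> ('a \<Rightarrow> 'u::topological_space set) \<Rightarrow> ('a \<Rightarrow> 'u \<Rightarrow> 'a)
    \<Rightarrow> 'a \<Rightarrow> ('a \<times> 'u) measure set" where
  "W1set Y U f y0 = {\<gamma> \<in> Wset Y U f. \<exists>\<xi>. finmeas_on (graphG Y U f) \<xi> \<and>
     (\<forall>\<phi> :: 'a \<Rightarrow> real. continuous_on Y \<phi> \<longrightarrow>
        (\<integral>p. \<phi> (fst p) - \<phi> y0 \<partial>\<gamma>) = (\<integral>p. \<phi> (f (fst p) (snd p)) - \<phi> (fst p) \<partial>\<xi>))}"

text \<open>k*(y0) = inf over W_1(y0) of the integral of k (as an extended real; inf of the empty set is +infinity).\<close>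
definition kstar :: "'a::topological_space set \<Rightarrow> ('a \<Rightarrow> 'u::topological_space set) \<Rightarrow> ('a \<Rightarrow> 'u \<Rightarrow> 'a)
    \<Rightarrow> ('a \<Rightarrow> 'u \<Rightarrow> real) \<Rightarrow> 'a \<Rightarrow> ereal" where
  "kstar Y U f k y0 = (INF \<gamma>\<in>W1set Y U f y0. ereal (\<integral>p. k (fst p) (snd p) \<partial>\<gamma>))"

definition periodic_reachable :: "'a set \<Rightarrow> ('a \<Rightarrow> 'u set) \<Rightarrow> ('a \<Rightarrow> 'u \<Rightarrow> 'a) \<Rightarrow> 'a
    \<Rightarrow> nat \<Rightarrow> (nat \<Rightarrow> 'a) \<Rightarrow> (nat \<Rightarrow> 'u) \<Rightarrow> bool" where
  "periodic_reachable Y U f y0 T yT uT \<longleftrightarrow>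
     T > 0 \<and>
     (\<forall>t. yT t \<in> Y \<and> uT t \<in> adm Y U f (yT t) \<and> yT (Suc t) = f (yT t) (uT t)) \<and>
     (\<forall>t. yT (t + T) = yT t \<and> uT (t + T) = uT t) \<and>
     (\<exists>tb (yr :: nat \<Rightarrow> 'a) (ur :: nat \<Rightarrow> 'u). yr 0 = y0 \<and>
        (\<forall>t<tb. yr t \<in> Y \<and> ur t \<in> adm Y U f (yr t) \<and> yr (Suc t) = f (yr t) (ur t)) \<and>
        yr tb = yT 0)"

definition Gamma_per :: "'a::topological_space set \<Rightarrow> ('a \<Rightarrow> 'u::topological_space set) \<Rightarrow> ('a \<Rightarrow> 'u \<Rightarrow> 'a)
    \<Rightarrow> 'a \<Rightarrow> ('a \<times> 'u) measure set" where
  "Gamma_per Y U f y0 = {\<gamma>. prob_on (graphG Y U f) \<gamma> \<and>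
     (\<exists>T yT uT. periodic_reachable Y U f y0 T yT uT \<and>
        (\<forall>Q\<in>sets \<gamma>. emeasure \<gamma> Q =
            ennreal ((1 / real T) * (\<Sum>t<T. indicator Q (yT t, uT t)))))}"

text \<open>V_per(y0) (extended real; inf of the empty set is +infinity).\<close>
definition V_per :: "'a set \<Rightarrow> ('a \<Rightarrow> 'u set) \<Rightarrow> ('a \<Rightarrow> 'u \<Rightarrow> 'a)
    \<Rightarrow> ('a \<Rightarrow> 'u \<Rightarrow> real) \<Rightarrow> 'a \<Rightarrow> ereal" where
  "V_per Y U f k y0 = (INF (T, yT, uT)\<in>{(T, yT, uT). periodic_reachable Y U f y0 T yT uT}.
       ereal ((1 / real T) * (\<Sum>t<T. k (yT t) (uT t))))"

end

theory Submission imports Defs begin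

definition wsm :: "'i set \<Rightarrow> real \<Rightarrow> ('i \<Rightarrow> 'b::topological_space) \<Rightarrow> 'b set \<Rightarrow> 'b measure" where
  "wsm I c p S = distr (density (count_space I) (\<lambda>_. ennreal c)) (restrict_space borel S) p"

lemma wsm_meas:
  assumes "p ` I \<subseteq> S"
  shows "p \<in> density (count_space I) (\<lambda>_. ennreal c) \<rightarrow>\<^sub>M restrict_space borel S"
proof -
  have "p \<in> count_space I \<rightarrow>\<^sub>M restrict_space borel S"
    using assms by (auto simp: measurable_count_space_eq1 space_restrict_space)
  then show ?thesis by (simp add: measurable_cong_sets)
qed

lemma wsm_sets: "sets (wsm I c p S) = sets (restrict_space borel S)"
  by (simp add: wsm_def)

lemma wsm_space: "space (wsm I c p S) = S"
  by (simp add: wsm_def space_restrict_space)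

lemma wsm_integral:
  assumes "finite I" "c \<ge> 0" "p ` I \<subseteq> S" "g \<in> borel_measurable (restrict_space borel S)"
  shows "integral\<^sup>L (wsm I c p S) g = c * (\<Sum>i\<in>I. g (p i))"
proof -
  have "integral\<^sup>L (wsm I c p S) g = integral\<^sup>L (density (count_space I) (\<lambda>_. ennreal c)) (\<lambda>i. g (p i))"
    unfolding wsm_def by (rule integral_distr[OF wsm_meas[OF assms(3)] assms(4)])
  also have "\<dots> = integral\<^sup>L (count_space I) (\<lambda>i. c *\<^sub>R g (p i))"
    by (rule integral_density) (auto simp: assms)
  also have "\<dots> = c * (\<Sum>i\<in>I. g (p i))"
    using assms(1) by (simp add: lebesgue_integral_count_space_finite sum_distrib_left)
  finally show ?thesis .
qed

lemma wsm_emeasure: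
  assumes "finite I" "c \<ge> 0" "p ` I \<subseteq> S" "Q \<in> sets (restrict_space borel S)"
  shows "emeasure (wsm I c p S) Q = ennreal (c * real (card {i\<in>I. p i \<in> Q}))"
proof -
  have eqI: "I \<inter> {i. p i \<in> Q} = {i\<in>I. p i \<in> Q}" by auto
  have "emeasure (wsm I c p S) Q = emeasure (density (count_space I) (\<lambda>_. ennreal c)) (p -` Q \<inter> I)"
    unfolding wsm_def by (subst emeasure_distr[OF wsm_meas[OF assms(3)] assms(4)]) simp
  also have "\<dots> = (\<integral>\<^sup>+ i. ennreal c * indicator (p -` Q \<inter> I) i \<partial>count_space I)"
    by (subst emeasure_density) auto
  also have "\<dots> = (\<Sum>i\<in>I. ennreal c * indicator (p -` Q \<inter> I) i)"
    using assms(1) by (simp add: nn_integral_count_space_finite)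
  also have "\<dots> = (\<Sum>i\<in>I. if p i \<in> Q then ennreal c else 0)"
    by (intro sum.cong) (auto simp: indicator_def)
  also have "\<dots> = (\<Sum>i\<in>{i\<in>I. p i \<in> Q}. ennreal c)"
    by (rule sum.inter_filter[symmetric]) (rule assms(1))
  also have "\<dots> = ennreal (c * real (card {i\<in>I. p i \<in> Q}))"
    using assms by (simp add: ennreal_of_nat_eq_real_of_nat ennreal_mult mult.commute eqI)
  finally show ?thesis .
qed

lemma wsm_finite:
  assumes "finite I" "c \<ge> 0" "p ` I \<subseteq> S"
  shows "finite_measure (wsm I c p S)"
proof (rule finite_measureI)
  have "space (wsm I c p S) \<in> sets (restrict_space borel S)"
    by (metis sets.top wsm_sets)
  then show "emeasure (wsm I c p S) (space (wsm I c p S)) \<noteq> \<infinity>"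
    using wsm_emeasure[OF assms] by simp
qed


lemma sum_ind_card: "(\<Sum>t<(T::nat). indicator Q (p t) :: real) = real (card {t\<in>{..<T}. p t \<in> Q})"
proof -
  have "real (card {t\<in>{..<T}. p t \<in> Q}) = (\<Sum>t\<in>{t\<in>{..<T}. p t \<in> Q}. 1)" by simp
  also have "\<dots> = (\<Sum>t<T. if p t \<in> Q then 1 else 0)" by (rule sum.inter_filter) auto
  finally show ?thesis unfolding indicator_def of_bool_def by (rule sym)
qed

theorem proposition2p4:
  fixes Y :: "'a::euclidean_space set"
    and U0 :: "'u::metric_space set"
    and U :: "'a \<Rightarrow> 'u set"
    and f :: "'a \<Rightarrow> 'u \<Rightarrow> 'a"
    and k :: "'a \<Rightarrow> 'u \<Rightarrow> real"
  assumes "Y \<noteq> {}" and "compact Y"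
    and "compact U0"
    and "\<forall>y\<in>Y. U y \<subseteq> U0 \<and> compact (U y)"
    and "usc_on Y U"
    and "continuous_on (UNIV \<times> U0) (\<lambda>(y, u). f y u)"
    and "continuous_on (UNIV \<times> U0) (\<lambda>(y, u). k y u)"
    and "\<forall>y\<in>Y. adm Y U f y \<noteq> {}"
  shows "\<forall>y0\<in>Y. Gamma_per Y U f y0 \<subseteq> W1set Y U f y0 \<and> kstar Y U f k y0 \<le> V_per Y U f k y0"
proof -
  define G where "G = graphG Y U f"
  have GY: "fst p \<in> Y" if "p \<in> G" for p using that by (auto simp: G_def graphG_def)
  have GfY: "f (fst p) (snd p) \<in> Y" if "p \<in> G" for p using that by (auto simp: G_def graphG_def adm_def)
  have GU: "G \<subseteq> UNIV \<times> U0" using assms(4) by (auto simp: G_def graphG_def adm_def)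
  have fc: "continuous_on G (\<lambda>p. f (fst p) (snd p))"
    using continuous_on_subset[OF assms(6) GU] by (simp add: case_prod_beta)
  have kc: "continuous_on G (\<lambda>p. k (fst p) (snd p))"
    using continuous_on_subset[OF assms(7) GU] by (simp add: case_prod_beta)
  have m1: "(\<lambda>p. \<phi> (f (fst p) (snd p)) - \<phi> (fst p)) \<in> borel_measurable (restrict_space borel G)"
    if "continuous_on Y \<phi>" for \<phi> :: "'a \<Rightarrow> real"
  proof (rule borel_measurable_continuous_on_restrict)
    have "continuous_on G (\<lambda>p. \<phi> (f (fst p) (snd p)))"
      by (rule continuous_on_compose2[OF that fc]) (auto intro: GfY)
    moreover have "continuous_on G (\<lambda>p. \<phi> (fst p))"
      by (rule continuous_on_compose2[OF that continuous_on_fst[OF continuous_on_id]]) (auto intro: GY)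
    ultimately show "continuous_on G (\<lambda>p. \<phi> (f (fst p) (snd p)) - \<phi> (fst p))"
      by (intro continuous_intros)
  qed
  have m2: "(\<lambda>p. \<phi> (fst p) - \<phi> y0) \<in> borel_measurable (restrict_space borel G)"
    if "continuous_on Y \<phi>" for \<phi> :: "'a \<Rightarrow> real" and y0
  proof (rule borel_measurable_continuous_on_restrict)
    have "continuous_on G (\<lambda>p. \<phi> (fst p))"
      by (rule continuous_on_compose2[OF that continuous_on_fst[OF continuous_on_id]]) (auto intro: GY)
    then show "continuous_on G (\<lambda>p. \<phi> (fst p) - \<phi> y0)"
      by (intro continuous_intros)
  qed
  have m3: "(\<lambda>p. k (fst p) (snd p)) \<in> borel_measurable (restrict_space borel G)"
    by (rule borel_measurable_continuous_on_restrict[OF kc])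
  have proc: "wsm {..<T} (1 / real T) (\<lambda>t. (yT t, uT t)) G \<in> W1set Y U f y0 \<and>
      wsm {..<T} (1 / real T) (\<lambda>t. (yT t, uT t)) G \<in> Gamma_per Y U f y0 \<and>
      integral\<^sup>L (wsm {..<T} (1 / real T) (\<lambda>t. (yT t, uT t)) G) (\<lambda>p. k (fst p) (snd p))
        = (1 / real T) * (\<Sum>t<T. k (yT t) (uT t))"
    if P: "periodic_reachable Y U f y0 T yT uT" for y0 T yT uT
  proof -
    define pt where "pt = (\<lambda>t. (yT t, uT t))"
    define gm where "gm = wsm {..<T} (1 / real T) pt G"
    have Tpos: "T > 0" and stp: "\<And>t. yT t \<in> Y \<and> uT t \<in> adm Y U f (yT t) \<and> yT (Suc t) = f (yT t) (uT t)"
      and per: "\<And>t. yT (t + T) = yT t \<and> uT (t + T) = uT t"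
      using P by (auto simp: periodic_reachable_def)
    obtain tb yr ur where yr0: "yr 0 = y0" and
      rstp: "\<And>t. t < tb \<Longrightarrow> yr t \<in> Y \<and> ur t \<in> adm Y U f (yr t) \<and> yr (Suc t) = f (yr t) (ur t)"
      and yrtb: "yr tb = yT 0"
      using P unfolding periodic_reachable_def by blast
    have ptG: "pt ` I \<subseteq> G" for I using stp by (auto simp: pt_def G_def graphG_def)
    have intg: "integral\<^sup>L gm g = (1 / real T) * (\<Sum>t<T. g (pt t))"
      if "g \<in> borel_measurable (restrict_space borel G)" for g
      unfolding gm_def by (rule wsm_integral[OF _ _ ptG that]) auto
    have Wm: "gm \<in> Wset Y U f"
    proof -
      have "prob_space gm"
      proof (rule prob_spaceI)
        have "space gm \<in> sets (restrict_space borel G)" unfolding gm_def by (metis sets.top wsm_sets)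
        moreover have "{i\<in>{..<T}. pt i \<in> G} = {..<T}" using ptG by auto
        ultimately show "emeasure gm (space gm) = 1"
          unfolding gm_def using Tpos by (subst wsm_emeasure[OF _ _ ptG]) (auto simp: wsm_space pt_def)
      qed
      moreover have "sets gm = sets (restrict_space borel G)" unfolding gm_def by (rule wsm_sets)
      moreover have "(\<integral>p. \<phi> (f (fst p) (snd p)) - \<phi> (fst p) \<partial>gm) = 0" if "continuous_on Y \<phi>" for \<phi> :: "'a \<Rightarrow> real"
      proof -
        have "(\<Sum>t<T. \<phi> (f (fst (pt t)) (snd (pt t))) - \<phi> (fst (pt t))) = (\<Sum>t<T. \<phi> (yT (Suc t)) - \<phi> (yT t))"
          using stp by (simp add: pt_def)
        also have "\<dots> = \<phi> (yT T) - \<phi> (yT 0)" by (rule sum_lessThan_telescope)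
        also have "\<dots> = 0" using per[of 0] by simp
        finally show ?thesis using intg[OF m1[OF that]] by simp
      qed
      ultimately show ?thesis by (auto simp: Wset_def prob_on_def G_def)
    qed
    define z where "z j = (if j < tb then (yr j, ur j) else pt (j - tb))" for j
    define w where "w j = fst (z j)" for j
    have zG: "z ` I \<subseteq> G" for I
    proof -
      have "z j \<in> G" for j
      proof (cases "j < tb")
        case True then show ?thesis using rstp[of j] by (simp add: z_def G_def graphG_def)
      next
        case False then show ?thesis using ptG[of UNIV] by (auto simp: z_def)
      qed
      then show ?thesis by auto
    qed
    have wS: "w (Suc j) = f (fst (z j)) (snd (z j))" for j
    proof -
      consider "Suc j < tb" | "Suc j = tb" | "j \<ge> tb" by linarith
      then show ?thesis
      proof cases
        case 1 then show ?thesis using rstp[of j] by (simp add: w_def z_def)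
      next
        case 2 then show ?thesis using rstp[of j] yrtb by (simp add: w_def z_def pt_def)
      next
        case 3 then have "Suc j - tb = Suc (j - tb)" by simp
        then show ?thesis using 3 stp[of "j - tb"] by (simp add: w_def z_def pt_def)
      qed
    qed
    have w0: "w 0 = y0" using yr0 yrtb by (cases "tb = 0") (auto simp: w_def z_def pt_def)
    have wtb: "w (tb + t) = yT t" for t by (simp add: w_def z_def pt_def)
    define IX where "IX = (SIGMA t:{..<T}. {..<tb + t})"
    define xi where "xi = wsm IX (1 / real T) (\<lambda>(t, j). z j) G"
    have zG2: "(\<lambda>(t, j). z j) ` IX \<subseteq> G" using zG by auto
    have fIX: "finite IX" by (simp add: IX_def)
    have W1m: "gm \<in> W1set Y U f y0"
      unfolding W1set_def
    proof (intro CollectI conjI Wm exI[of _ xi] allI impI)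
      show "finmeas_on (graphG Y U f) xi"
        unfolding finmeas_on_def xi_def G_def[symmetric]
        by (intro conjI wsm_finite[OF fIX _ zG2] wsm_sets) auto
      fix \<phi> :: "'a \<Rightarrow> real" assume c: "continuous_on Y \<phi>"
      have wS2: "\<phi> (f (fst (z j)) (snd (z j))) - \<phi> (fst (z j)) = \<phi> (w (Suc j)) - \<phi> (w j)" for j
        using wS[of j] by (simp add: w_def)
      have "(\<integral>p. \<phi> (f (fst p) (snd p)) - \<phi> (fst p) \<partial>xi)
          = (1 / real T) * (\<Sum>(t,j)\<in>IX. \<phi> (f (fst (z j)) (snd (z j))) - \<phi> (fst (z j)))"
        unfolding xi_def by (subst wsm_integral[OF fIX _ zG2 m1[OF c]]) (auto simp: case_prod_beta)
      also have "(\<Sum>(t,j)\<in>IX. \<phi> (f (fst (z j)) (snd (z j))) - \<phi> (fst (z j)))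
          = (\<Sum>t<T. \<Sum>j<tb + t. \<phi> (w (Suc j)) - \<phi> (w j))"
        unfolding IX_def by (subst sum.Sigma[symmetric]) (simp_all add: wS2)
      also have "\<dots> = (\<Sum>t<T. \<phi> (fst (pt t)) - \<phi> y0)"
        by (intro sum.cong refl) (simp add: sum_lessThan_telescope[of "\<lambda>j. \<phi> (w j)"] wtb w0 pt_def)
      finally show "(\<integral>p. \<phi> (fst p) - \<phi> y0 \<partial>gm) = (\<integral>p. \<phi> (f (fst p) (snd p)) - \<phi> (fst p) \<partial>xi)"
        using intg[OF m2[OF c]] by simp
    qed
    have Gm: "gm \<in> Gamma_per Y U f y0"
      unfolding Gamma_per_def
    proof (intro CollectI conjI exI[of _ T] exI[of _ yT] exI[of _ uT] P ballI)
      show "prob_on (graphG Y U f) gm" using Wm by (simp add: Wset_def)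
      fix Q assume "Q \<in> sets gm"
      then have Q: "Q \<in> sets (restrict_space borel G)" by (simp add: gm_def wsm_sets)
      show "emeasure gm Q = ennreal (1 / real T * (\<Sum>t<T. indicator Q (yT t, uT t)))"
        unfolding gm_def using sum_ind_card[where T=T and Q=Q and p=pt]
        by (subst wsm_emeasure[OF _ _ ptG Q]) (auto simp: pt_def)
    qed
    show ?thesis using W1m Gm intg[OF m3] by (simp add: gm_def pt_def)
  qed
  have uniq: "\<gamma> = wsm {..<T} (1 / real T) (\<lambda>t. (yT t, uT t)) G"
    if "prob_on G \<gamma>" "periodic_reachable Y U f y0 T yT uT"
       "\<forall>Q\<in>sets \<gamma>. emeasure \<gamma> Q = ennreal ((1 / real T) * (\<Sum>t<T. indicator Q (yT t, uT t)))"
    for \<gamma> y0 T yT uT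
  proof (rule measure_eqI)
    have ptG: "(\<lambda>t. (yT t, uT t)) ` I \<subseteq> G" for I using that(2)
      by (auto simp: periodic_reachable_def G_def graphG_def)
    show s: "sets \<gamma> = sets (wsm {..<T} (1 / real T) (\<lambda>t. (yT t, uT t)) G)"
      using that(1) by (simp add: prob_on_def wsm_sets)
    fix Q assume "Q \<in> sets \<gamma>"
    then show "emeasure \<gamma> Q = emeasure (wsm {..<T} (1 / real T) (\<lambda>t. (yT t, uT t)) G) Q"
      using that(3) s sum_ind_card[where T=T and Q=Q and p="\<lambda>t. (yT t, uT t)"]
      by (subst wsm_emeasure[OF _ _ ptG]) (auto simp: wsm_sets)
  qed
  show ?thesis
  proof (intro ballI conjI)
    fix y0 assume "y0 \<in> Y"
    show "Gamma_per Y U f y0 \<subseteq> W1set Y U f y0"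
    proof
      fix \<gamma> assume "\<gamma> \<in> Gamma_per Y U f y0"
      then obtain T yT uT where "prob_on G \<gamma>" "periodic_reachable Y U f y0 T yT uT"
        "\<forall>Q\<in>sets \<gamma>. emeasure \<gamma> Q = ennreal ((1 / real T) * (\<Sum>t<T. indicator Q (yT t, uT t)))"
        unfolding Gamma_per_def G_def by blast
      then have "\<gamma> = wsm {..<T} (1 / real T) (\<lambda>t. (yT t, uT t)) G" by (rule uniq)
      then show "\<gamma> \<in> W1set Y U f y0" using proc[OF \<open>periodic_reachable Y U f y0 T yT uT\<close>] by simp
    qed
    show "kstar Y U f k y0 \<le> V_per Y U f k y0"
      unfolding V_per_def kstar_def
    proof (rule INF_greatest)
      fix x assume "x \<in> {(T, yT, uT). periodic_reachable Y U f y0 T yT uT}"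
      then obtain T yT uT where x: "x = (T, yT, uT)" and P: "periodic_reachable Y U f y0 T yT uT" by blast
      show "(INF \<gamma>\<in>W1set Y U f y0. ereal (\<integral>p. k (fst p) (snd p) \<partial>\<gamma>))
           \<le> (case x of (T, yT, uT) \<Rightarrow> ereal (1 / real T * (\<Sum>t<T. k (yT t) (uT t))))"
        using proc[OF P] x by (auto intro!: INF_lower2)
    qed
  qed
qed

end
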